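(* Let $A$ be a subset of a real Banach space $X$. If $\mathbf E(A)<\infty$, then $A$ is precompact.
   Context: A brick in $X$ is a set $K_{\mathcal B,\mathcal E}=\{x\in X:\ |e_n^*(x)|\le\varepsilon_n\ \forall n\}$, where $\mathcal B=(e_n)$ is a normalized Schauder basis of $X$ with biorthogonal functionals $(e_n^* )$ and $\mathcal E=(\varepsilon_n)$ is a sequence of nonnegative numbers. Its unconditional radius is $r^{\rm unc}(K_{\mathcal B,\mathcal E})=\sup_{\theta_n=\pm1}\|\sum_n\theta_n\varepsilon_ne_n\|$ (norm of a divergent series $=\infty$). The entropy is $\mathbf E(A)=\inf\{r^{\rm unc}(K_{\mathcal B,\mathcal E}): A\subseteq K_{\mathcal B,\mathcal E}\}$, equal to $\infty$ if no brick of finite unconditional radius contains $A$. A set is precompact if for every $\varepsilon>0$ it contains a finite $\varepsilon$-net. *)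

theory Defs
  imports "HOL-Analysis.Analysis"
begin

definition schauder_basis :: "(nat \<Rightarrow> 'a::banach) \<Rightarrow> bool" where
  "schauder_basis e \<longleftrightarrow> (\<forall>x. \<exists>!c::nat \<Rightarrow> real. (\<lambda>n. c n *\<^sub>R e n) sums x)"

definition normalized_schauder_basis :: "(nat \<Rightarrow> 'a::banach) \<Rightarrow> bool" where
  "normalized_schauder_basis e \<longleftrightarrow> schauder_basis e \<and> (\<forall>n. norm (e n) = 1)"

definition coord :: "(nat \<Rightarrow> 'a::banach) \<Rightarrow> nat \<Rightarrow> 'a \<Rightarrow> real" where
  "coord e n x = (THE c::nat \<Rightarrow> real. (\<lambda>k. c k *\<^sub>R e k) sums x) n"

definition brick :: "(nat \<Rightarrow> 'a::banach) \<Rightarrow> (nat \<Rightarrow> real) \<Rightarrow> 'a set" where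
  "brick e \<epsilon> = {x. \<forall>n. \<bar>coord e n x\<bar> \<le> \<epsilon> n}"

definition r_unc :: "(nat \<Rightarrow> 'a::banach) \<Rightarrow> (nat \<Rightarrow> real) \<Rightarrow> ereal" where
  "r_unc e \<epsilon> = (SUP \<theta>\<in>{\<theta>::nat \<Rightarrow> real. \<forall>n. \<theta> n \<in> {-1, 1}}.
      (if summable (\<lambda>n. (\<theta> n * \<epsilon> n) *\<^sub>R e n)
       then ereal (norm (\<Sum>n. (\<theta> n * \<epsilon> n) *\<^sub>R e n)) else \<infinity>))"

text \<open>Entropy: infimum over all bricks (normalized Schauder basis, nonnegative
  sequence) containing A; Inf of the empty set is \<infinity>.\<close>
definition entropy :: "'a::banach set \<Rightarrow> ereal" where
  "entropy A = (INF p\<in>{(e, \<epsilon>). normalized_schauder_basis e \<and> (\<forall>n. 0 \<le> \<epsilon> n)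
                      \<and> A \<subseteq> brick e \<epsilon>}. r_unc (fst p) (snd p))"

definition precompact :: "'a::metric_space set \<Rightarrow> bool" where
  "precompact A \<longleftrightarrow> (\<forall>\<epsilon>>0. \<exists>F. finite F \<and> F \<subseteq> A \<and> A \<subseteq> (\<Union>y\<in>F. cball y \<epsilon>))"

end

theory Submission
  imports Defs
begin

lemma cube_to_signs:
  fixes v :: "nat \<Rightarrow> 'a::real_normed_vector"
  assumes "finite F" "\<forall>n\<in>F. \<bar>c n\<bar> \<le> 1"
  shows "\<exists>\<theta>. (\<forall>n. \<theta> n \<in> {-1,1}) \<and>
     norm ((\<Sum>n\<in>F. c n *\<^sub>R v n) + w) \<le> norm ((\<Sum>n\<in>F. \<theta> n *\<^sub>R v n) + w)"
  using assms
proof (induction F arbitrary: w rule: finite_induct)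
  case empty
  show ?case by (rule exI[of _ "\<lambda>_. 1"]) auto
next
  case (insert m F)
  define S where "S = (\<Sum>n\<in>F. c n *\<^sub>R v n)"
  define P where "P = S + (v m + w)"
  define Q where "Q = S + (- v m + w)"
  define a where "a = (1 + c m) / 2"
  define b where "b = (1 - c m) / 2"
  have cm: "\<bar>c m\<bar> \<le> 1" using insert by auto
  have a0: "a \<ge> 0" "b \<ge> 0" "a + b = 1" using cm unfolding a_def b_def by (auto simp: field_simps)
  have eq: "(\<Sum>n\<in>insert m F. c n *\<^sub>R v n) + w = a *\<^sub>R P + b *\<^sub>R Q"
  proof -
    have "a *\<^sub>R P + b *\<^sub>R Q = (a+b) *\<^sub>R S + (a - b) *\<^sub>R v m + (a+b) *\<^sub>R w"
      by (simp add: P_def Q_def algebra_simps)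
    also have "\<dots> = S + c m *\<^sub>R v m + w"
    proof -
      have amb: "a - b = c m" unfolding a_def b_def by (simp add: diff_divide_distrib[symmetric])
      show ?thesis by (simp only: a0(3) amb scaleR_one)
    qed
    finally show ?thesis using insert by (simp add: S_def algebra_simps)
  qed
  have "norm ((\<Sum>n\<in>insert m F. c n *\<^sub>R v n) + w) \<le> a * norm P + b * norm Q"
  proof -
    have "norm (a *\<^sub>R P + b *\<^sub>R Q) \<le> norm (a *\<^sub>R P) + norm (b *\<^sub>R Q)" by (rule norm_triangle_ineq)
    also have "\<dots> = a * norm P + b * norm Q" using a0 by simp
    finally show ?thesis unfolding eq .
  qed
  also have "\<dots> \<le> max (norm P) (norm Q)"
  proof -
    have "a * norm P \<le> a * max (norm P) (norm Q)" "b * norm Q \<le> b * max (norm P) (norm Q)"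
      using a0 by (auto intro: mult_left_mono)
    moreover have "a * max (norm P) (norm Q) + b * max (norm P) (norm Q) = (a + b) * max (norm P) (norm Q)"
      by (simp only: distrib_right)
    ultimately show ?thesis using a0(3) by simp
  qed
  finally have main: "norm ((\<Sum>n\<in>insert m F. c n *\<^sub>R v n) + w) \<le> max (norm P) (norm Q)" .
  have IH: "\<And>w. \<exists>\<theta>. (\<forall>n. \<theta> n \<in> {-1,1}) \<and> norm (S + w) \<le> norm ((\<Sum>n\<in>F. \<theta> n *\<^sub>R v n) + w)"
    using insert unfolding S_def by auto
  show ?case
  proof (cases "norm Q \<le> norm P")
    case True
    obtain \<theta> where th: "\<forall>n. \<theta> n \<in> {-1,1}" "norm P \<le> norm ((\<Sum>n\<in>F. \<theta> n *\<^sub>R v n) + (v m + w))"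
      using IH[of "v m + w"] unfolding P_def by blast
    have s: "(\<Sum>n\<in>insert m F. (\<theta>(m:=1)) n *\<^sub>R v n) = v m + (\<Sum>n\<in>F. \<theta> n *\<^sub>R v n)"
      using insert by (auto intro!: sum.cong)
    have s2: "(\<Sum>n\<in>insert m F. (\<theta>(m:=1)) n *\<^sub>R v n) + w = (\<Sum>n\<in>F. \<theta> n *\<^sub>R v n) + (v m + w)"
      unfolding s by (simp only: add_ac)
    show ?thesis
    proof (rule exI[of _ "\<theta>(m:=1)"], intro conjI)
      show "\<forall>n. (\<theta>(m:=1)) n \<in> {-1,1}" using th(1) by simp
      show "norm ((\<Sum>n\<in>insert m F. c n *\<^sub>R v n) + w) \<le> norm ((\<Sum>n\<in>insert m F. (\<theta>(m:=1)) n *\<^sub>R v n) + w)"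
        unfolding s2 using th(2) main True by linarith
    qed
  next
    case False
    obtain \<theta> where th: "\<forall>n. \<theta> n \<in> {-1,1}" "norm Q \<le> norm ((\<Sum>n\<in>F. \<theta> n *\<^sub>R v n) + (- v m + w))"
      using IH[of "- v m + w"] unfolding Q_def by blast
    have s: "(\<Sum>n\<in>insert m F. (\<theta>(m:=-1)) n *\<^sub>R v n) = - v m + (\<Sum>n\<in>F. \<theta> n *\<^sub>R v n)"
      using insert by (auto intro!: sum.cong)
    have s2: "(\<Sum>n\<in>insert m F. (\<theta>(m:=-1)) n *\<^sub>R v n) + w = (\<Sum>n\<in>F. \<theta> n *\<^sub>R v n) + (- v m + w)"
      unfolding s by (simp only: add_ac)
    show ?thesis
    proof (rule exI[of _ "\<theta>(m:=-1)"], intro conjI)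
      show "\<forall>n. (\<theta>(m:=-1)) n \<in> {-1,1}" using th(1) by simp
      show "norm ((\<Sum>n\<in>insert m F. c n *\<^sub>R v n) + w) \<le> norm ((\<Sum>n\<in>insert m F. (\<theta>(m:=-1)) n *\<^sub>R v n) + w)"
        unfolding s2 using th(2) main False by linarith
    qed
  qed
qed

lemma unif_tail_signs:
  fixes v :: "nat \<Rightarrow> 'a::banach"
  assumes summ: "\<forall>\<theta>. (\<forall>n. \<theta> n \<in> {-1,1}) \<longrightarrow> summable (\<lambda>n. \<theta> n *\<^sub>R v n)" and d: "\<delta> > 0"
  shows "\<exists>N. \<forall>m\<ge>N. \<forall>n. \<forall>\<theta>. (\<forall>k. \<theta> k \<in> {-1,1}) \<longrightarrow> norm (\<Sum>k\<in>{m..<n}. \<theta> k *\<^sub>R v k) < \<delta>"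
proof (rule ccontr)
  assume "\<not> ?thesis"
  then have "\<forall>N. \<exists>m n \<theta>. m \<ge> N \<and> (\<forall>k. \<theta> k \<in> {-1,1}) \<and> norm (\<Sum>k\<in>{m..<n}. \<theta> k *\<^sub>R v k) \<ge> \<delta>"
    by (auto simp: not_less)
  then obtain Mf Nf Tf where MNT: "\<And>N. Mf N \<ge> N \<and> (\<forall>k. Tf N k \<in> {-1,1}) \<and>
        norm (\<Sum>k\<in>{Mf N..<Nf N}. Tf N k *\<^sub>R v k) \<ge> \<delta>"
    by metis
  have MN: "Mf N < Nf N" for N
  proof (rule ccontr)
    assume "\<not> Mf N < Nf N"
    then have "{Mf N..<Nf N} = {}" by auto
    then show False using MNT[of N] d by auto
  qed
  define b where "b = rec_nat 0 (\<lambda>_ x. Nf x)"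
  have b0: "b 0 = 0" and bS: "\<And>k. b (Suc k) = Nf (b k)" by (auto simp: b_def)
  have sm: "strict_mono b"
    unfolding strict_mono_Suc_iff using bS MN MNT by (metis order.strict_trans1)
  define kn where "kn n = Max {k. b k \<le> n}" for n
  have kn: "kn n = j" if "b j \<le> n" "n < b (Suc j)" for n j
  proof -
    have sub: "{k. b k \<le> n} \<subseteq> {..n}" using seq_suble[OF sm] by (auto intro: order_trans)
    have fin: "finite {k. b k \<le> n}" using finite_subset[OF sub] by auto
    have "\<forall>k\<in>{k. b k \<le> n}. k \<le> j"
    proof
      fix k assume "k \<in> {k. b k \<le> n}"
      then have "b k < b (Suc j)" using that by auto
      then show "k \<le> j" using sm by (metis less_Suc_eq_le strict_mono_less)
    qed
    then show ?thesis unfolding kn_def using fin that by (intro Max_eqI) auto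
  qed
  define \<theta> where "\<theta> n = Tf (b (kn n)) n" for n
  have ths: "\<forall>n. \<theta> n \<in> {-1,1}" using MNT by (auto simp: \<theta>_def)
  from summ ths have "summable (\<lambda>n. \<theta> n *\<^sub>R v n)" by blast
  then obtain N0 where N0: "\<forall>m\<ge>N0. \<forall>n. norm (\<Sum>k\<in>{m..<n}. \<theta> k *\<^sub>R v k) < \<delta>"
    unfolding summable_Cauchy using d by blast
  define j where "j = N0"
  have "b j \<ge> j" using seq_suble[OF sm] by auto
  then have ge: "Mf (b j) \<ge> N0" using MNT[of "b j"] j_def by auto
  have "(\<Sum>k\<in>{Mf (b j)..<Nf (b j)}. \<theta> k *\<^sub>R v k) = (\<Sum>k\<in>{Mf (b j)..<Nf (b j)}. Tf (b j) k *\<^sub>R v k)"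
  proof (rule sum.cong)
    fix k assume "k \<in> {Mf (b j)..<Nf (b j)}"
    then have "b j \<le> k" "k < b (Suc j)" using MNT[of "b j"] bS by auto
    then show "\<theta> k *\<^sub>R v k = Tf (b j) k *\<^sub>R v k" using kn by (simp add: \<theta>_def)
  qed simp
  moreover have "norm (\<Sum>k\<in>{Mf (b j)..<Nf (b j)}. \<theta> k *\<^sub>R v k) < \<delta>"
    using N0 ge by blast
  ultimately have "norm (\<Sum>k\<in>{Mf (b j)..<Nf (b j)}. Tf (b j) k *\<^sub>R v k) < \<delta>" by simp
  then show False using MNT[of "b j"] by linarith
qed

lemma floor_eq_close:
  fixes a b \<eta> :: real
  assumes "\<eta> > 0" "\<lfloor>a / \<eta>\<rfloor> = \<lfloor>b / \<eta>\<rfloor>"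
  shows "\<bar>a - b\<bar> \<le> \<eta>"
proof -
  have "\<bar>a / \<eta> - b / \<eta>\<bar> < 1" using assms(2)
    using floor_correct[of "a / \<eta>"] floor_correct[of "b / \<eta>"] by linarith
  then have "\<bar>(a - b) / \<eta>\<bar> < 1" by (simp add: diff_divide_distrib)
  then have "\<bar>a - b\<bar> / \<eta> < 1" using assms(1) by simp
  then show ?thesis using assms(1) by (simp add: divide_less_eq)
qed

theorem proposition4p3:
  fixes A :: "'a::banach set"
  assumes "entropy A < \<infinity>"
  shows "precompact A"
proof -
  obtain e \<epsilon> where B: "normalized_schauder_basis e" and e0: "\<forall>n. 0 \<le> \<epsilon> n"
    and AB: "A \<subseteq> brick e \<epsilon>" and R: "r_unc e \<epsilon> < \<infinity>"
    using assms unfolding entropy_def INF_less_iff by auto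
  define v where "v n = \<epsilon> n *\<^sub>R e n" for n
  have summ: "\<forall>\<theta>. (\<forall>n. \<theta> n \<in> {-1,1}) \<longrightarrow> summable (\<lambda>n. \<theta> n *\<^sub>R v n)"
  proof (intro allI impI)
    fix \<theta> :: "nat \<Rightarrow> real" assume th: "\<forall>n. \<theta> n \<in> {-1,1}"
    have "(if summable (\<lambda>n. (\<theta> n * \<epsilon> n) *\<^sub>R e n)
       then ereal (norm (\<Sum>n. (\<theta> n * \<epsilon> n) *\<^sub>R e n)) else \<infinity>) \<le> r_unc e \<epsilon>"
      unfolding r_unc_def by (rule SUP_upper) (use th in auto)
    then have "summable (\<lambda>n. (\<theta> n * \<epsilon> n) *\<^sub>R e n)" using R by (auto split: if_splits)
    then show "summable (\<lambda>n. \<theta> n *\<^sub>R v n)" by (simp add: v_def)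
  qed
  have tail: "\<exists>N. \<forall>m\<ge>N. \<forall>n. \<forall>d. (\<forall>k. \<bar>d k\<bar> \<le> 1) \<longrightarrow> norm (\<Sum>k\<in>{m..<n}. d k *\<^sub>R v k) < \<delta>"
    if dpos: "\<delta> > 0" for \<delta>
  proof -
    obtain N where N: "\<forall>m\<ge>N. \<forall>n. \<forall>\<theta>. (\<forall>k. \<theta> k \<in> {-1,1}) \<longrightarrow> norm (\<Sum>k\<in>{m..<n}. \<theta> k *\<^sub>R v k) < \<delta>"
      using unif_tail_signs[OF summ dpos] by blast
    show ?thesis
    proof (intro exI allI impI)
      fix m n :: nat and d :: "nat \<Rightarrow> real" assume m: "N \<le> m" and d: "\<forall>k. \<bar>d k\<bar> \<le> 1"
      obtain \<theta> where th: "\<forall>k. \<theta> k \<in> {-1,1}"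
        "norm ((\<Sum>k\<in>{m..<n}. d k *\<^sub>R v k) + 0) \<le> norm ((\<Sum>k\<in>{m..<n}. \<theta> k *\<^sub>R v k) + 0)"
        using cube_to_signs[of "{m..<n}" d v 0] d by auto
      have "norm (\<Sum>k\<in>{m..<n}. \<theta> k *\<^sub>R v k) < \<delta>" using N m th(1) by blast
      then show "norm (\<Sum>k\<in>{m..<n}. d k *\<^sub>R v k) < \<delta>" using th(2) by simp
    qed
  qed
  define c where "c x n = coord e n x" for x n
  have sums: "(\<lambda>n. c x n *\<^sub>R e n) sums x" for x
  proof -
    have "\<exists>!c::nat \<Rightarrow> real. (\<lambda>n. c n *\<^sub>R e n) sums x"
      using B unfolding normalized_schauder_basis_def schauder_basis_def by blast
    from theI'[OF this] show ?thesis unfolding c_def coord_def by simp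
  qed
  have cb: "\<bar>c x n\<bar> \<le> \<epsilon> n" if "x \<in> A" for x n
    using AB that unfolding brick_def c_def by auto
  have tailx: "\<exists>N. \<forall>x\<in>A. norm (x - (\<Sum>n<N. c x n *\<^sub>R e n)) \<le> \<delta>" if dpos: "\<delta> > 0" for \<delta>
  proof -
    obtain N where N: "\<forall>m\<ge>N. \<forall>n. \<forall>d. (\<forall>k. \<bar>d k\<bar> \<le> 1) \<longrightarrow> norm (\<Sum>k\<in>{m..<n}. d k *\<^sub>R v k) < \<delta>"
      using tail[OF dpos] by blast
    show ?thesis
    proof (intro exI ballI)
      fix x assume x: "x \<in> A"
      define d where "d k = (if \<epsilon> k = 0 then 0 else c x k / \<epsilon> k)" for k
      have d1: "\<forall>k. \<bar>d k\<bar> \<le> 1"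
      proof
        fix k show "\<bar>d k\<bar> \<le> 1"
          using cb[OF x, of k] e0 by (auto simp: d_def abs_divide divide_le_eq)
      qed
      have dv: "d k *\<^sub>R v k = c x k *\<^sub>R e k" for k
        using cb[OF x, of k] by (auto simp: d_def v_def)
      have bnd: "norm (\<Sum>k\<in>{N..<m}. c x k *\<^sub>R e k) < \<delta>" for m
      proof -
        have "norm (\<Sum>k\<in>{N..<m}. d k *\<^sub>R v k) < \<delta>" using N d1 by blast
        then show ?thesis by (simp add: dv)
      qed
      have lim: "(\<lambda>m. norm ((\<Sum>k<m. c x k *\<^sub>R e k) - (\<Sum>k<N. c x k *\<^sub>R e k)))
          \<longlonglongrightarrow> norm (x - (\<Sum>k<N. c x k *\<^sub>R e k))"
        using sums[of x] unfolding sums_def by (intro tendsto_intros)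
      have ev: "\<forall>m\<ge>N. norm ((\<Sum>k<m. c x k *\<^sub>R e k) - (\<Sum>k<N. c x k *\<^sub>R e k)) \<le> \<delta>"
      proof (intro allI impI)
        fix m assume "N \<le> m"
        then have "(\<Sum>k<m. c x k *\<^sub>R e k) - (\<Sum>k<N. c x k *\<^sub>R e k) = (\<Sum>k\<in>{N..<m}. c x k *\<^sub>R e k)"
          using sum.atLeastLessThan_concat[of 0 N m "\<lambda>k. c x k *\<^sub>R e k"]
          by (simp add: atLeast0LessThan algebra_simps)
        then show "norm ((\<Sum>k<m. c x k *\<^sub>R e k) - (\<Sum>k<N. c x k *\<^sub>R e k)) \<le> \<delta>"
          using bnd[of m] by simp
      qed
      show "norm (x - (\<Sum>n<N. c x n *\<^sub>R e n)) \<le> \<delta>"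
        by (rule LIMSEQ_le_const2[OF lim]) (use ev in blast)
    qed
  qed
  show ?thesis unfolding precompact_def
  proof (intro allI impI)
    fix r :: real assume r: "r > 0"
    obtain N where N: "\<forall>x\<in>A. norm (x - (\<Sum>n<N. c x n *\<^sub>R e n)) \<le> r / 4"
      using tailx[of "r/4"] r by auto
    define \<eta> where "\<eta> = r / (4 * (real N + 1))"
    have eta: "\<eta> > 0" using r by (simp add: \<eta>_def)
    have Neta: "real N * \<eta> \<le> r / 4"
    proof -
      have "real N * \<eta> = r / 4 * (real N / (real N + 1))" by (simp add: \<eta>_def field_simps)
      also have "\<dots> \<le> r / 4 * 1" using r by (intro mult_left_mono) auto
      finally show ?thesis by simp
    qed
    define q where "q x = restrict (\<lambda>n. \<lfloor>c x n / \<eta>\<rfloor>) {..<N}" for x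
    have qsub: "q ` A \<subseteq> PiE {..<N} (\<lambda>n. {\<lfloor>- \<epsilon> n / \<eta>\<rfloor>..\<lfloor>\<epsilon> n / \<eta>\<rfloor>})"
    proof
      fix g assume "g \<in> q ` A"
      then obtain x where x: "x \<in> A" "g = q x" by auto
      have "\<lfloor>- \<epsilon> n / \<eta>\<rfloor> \<le> \<lfloor>c x n / \<eta>\<rfloor> \<and> \<lfloor>c x n / \<eta>\<rfloor> \<le> \<lfloor>\<epsilon> n / \<eta>\<rfloor>" for n
      proof -
        have "- \<epsilon> n \<le> c x n" "c x n \<le> \<epsilon> n" using cb[OF x(1), of n] by auto
        then have "- \<epsilon> n / \<eta> \<le> c x n / \<eta>" "c x n / \<eta> \<le> \<epsilon> n / \<eta>"
          using divide_right_mono[of "- \<epsilon> n" "c x n" \<eta>] divide_right_mono[of "c x n" "\<epsilon> n" \<eta>] eta by auto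
        then show ?thesis by (auto intro: floor_mono)
      qed
      then show "g \<in> PiE {..<N} (\<lambda>n. {\<lfloor>- \<epsilon> n / \<eta>\<rfloor>..\<lfloor>\<epsilon> n / \<eta>\<rfloor>})"
        using x by (auto simp: q_def)
    qed
    have finq: "finite (q ` A)"
      by (rule finite_subset[OF qsub]) (auto intro!: finite_PiE)
    define pick where "pick g = (SOME x. x \<in> A \<and> q x = g)" for g
    define F where "F = pick ` q ` A"
    have close: "dist y x \<le> r" if x: "x \<in> A" and y: "y \<in> A" and qq: "q y = q x" for x y
    proof -
      have cl: "\<bar>c x n - c y n\<bar> \<le> \<eta>" if "n < N" for n
      proof -
        have "q x n = q y n" using qq by simp
        then have "\<lfloor>c x n / \<eta>\<rfloor> = \<lfloor>c y n / \<eta>\<rfloor>" using that by (simp add: q_def)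
        then show ?thesis using floor_eq_close[OF eta] by blast
      qed
      have "norm ((\<Sum>n<N. c x n *\<^sub>R e n) - (\<Sum>n<N. c y n *\<^sub>R e n))
          = norm (\<Sum>n<N. (c x n - c y n) *\<^sub>R e n)"
        by (simp add: sum_subtractf scaleR_diff_left)
      also have "\<dots> \<le> (\<Sum>n<N. norm ((c x n - c y n) *\<^sub>R e n))" by (rule norm_sum)
      also have "\<dots> = (\<Sum>n<N. \<bar>c x n - c y n\<bar>)"
        using B by (simp add: normalized_schauder_basis_def)
      also have "\<dots> \<le> (\<Sum>n<N. \<eta>)" by (rule sum_mono) (use cl in auto)
      also have "\<dots> = real N * \<eta>" by simp
      finally have mid: "norm ((\<Sum>n<N. c x n *\<^sub>R e n) - (\<Sum>n<N. c y n *\<^sub>R e n)) \<le> r / 4"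
        using Neta by linarith
      have "dist y x = norm ((y - (\<Sum>n<N. c y n *\<^sub>R e n)) + ((\<Sum>n<N. c y n *\<^sub>R e n) - (\<Sum>n<N. c x n *\<^sub>R e n))
            - (x - (\<Sum>n<N. c x n *\<^sub>R e n)))"
        by (simp add: dist_norm)
      also have "\<dots> \<le> norm (y - (\<Sum>n<N. c y n *\<^sub>R e n)) + norm ((\<Sum>n<N. c y n *\<^sub>R e n) - (\<Sum>n<N. c x n *\<^sub>R e n))
            + norm (x - (\<Sum>n<N. c x n *\<^sub>R e n))"
        using norm_triangle_ineq4[of "(y - (\<Sum>n<N. c y n *\<^sub>R e n)) + ((\<Sum>n<N. c y n *\<^sub>R e n) - (\<Sum>n<N. c x n *\<^sub>R e n))" "x - (\<Sum>n<N. c x n *\<^sub>R e n)"]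
          norm_triangle_ineq[of "y - (\<Sum>n<N. c y n *\<^sub>R e n)" "(\<Sum>n<N. c y n *\<^sub>R e n) - (\<Sum>n<N. c x n *\<^sub>R e n)"]
        by linarith
      also have "\<dots> \<le> r/4 + r/4 + r/4"
        using N x y mid by (intro add_mono) (auto simp: norm_minus_commute)
      finally show ?thesis using r by linarith
    qed
    show "\<exists>F. finite F \<and> F \<subseteq> A \<and> A \<subseteq> (\<Union>y\<in>F. cball y r)"
    proof (intro exI conjI)
      show "finite F" using finq by (simp add: F_def)
      have pk: "pick (q x) \<in> A \<and> q (pick (q x)) = q x" if "x \<in> A" for x
        unfolding pick_def by (rule someI[of _ x]) (use that in auto)
      show "F \<subseteq> A" using pk by (auto simp: F_def)
      show "A \<subseteq> (\<Union>y\<in>F. cball y r)"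
      proof
        fix x assume x: "x \<in> A"
        have "pick (q x) \<in> F" using x by (auto simp: F_def)
        moreover have "dist (pick (q x)) x \<le> r" using close[OF x] pk[OF x] by blast
        ultimately show "x \<in> (\<Union>y\<in>F. cball y r)" by auto
      qed
    qed
  qed
qed

end
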